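(* In an Ehresmann semigroup $S$, we have ${\le_l}\circ{\le_r}={\le_r}\circ{\le_l}$ (as composites of binary relations on $S$).
   Context: A DRC-semigroup is $(S,\cdot,D,R)$, $(S,\cdot)$ a semigroup, $D,R:S\to S$ with, for all $a,b$: $D(a)a=a$, $aR(a)=a$; $D(ab)=D(aD(b))$, $R(ab)=R(R(a)b)$; $D(ab)=D(a)D(ab)D(a)$, $R(ab)=R(b)R(ab)R(b)$; $R(D(a))=D(a)$, $D(R(a))=R(a)$. An Ehresmann semigroup is a DRC-semigroup additionally satisfying $D(a)D(b)=D(b)D(a)$ and $R(a)R(b)=R(b)R(a)$ for all $a,b$. Projections $\mathbf P(S)=\{D(a):a\in S\}$ are ordered by $p\le q\iff p=pq=qp$. On $S$ define $a\le_l b\iff a=pb$ for some $p\in\mathbf P(S)$ with $p\le D(b)$, and $a\le_r b\iff a=bq$ for some $q\in\mathbf P(S)$ with $q\le R(b)$. *)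

theory Defs
  imports Main
begin

definition DRC_semigroup :: "('a::semigroup_mult \<Rightarrow> 'a) \<Rightarrow> ('a \<Rightarrow> 'a) \<Rightarrow> bool" where
  "DRC_semigroup D R \<longleftrightarrow>
     (\<forall>a. D a * a = a) \<and> (\<forall>a. a * R a = a) \<and>
     (\<forall>a b. D (a * b) = D (a * D b)) \<and> (\<forall>a b. R (a * b) = R (R a * b)) \<and>
     (\<forall>a b. D (a * b) = D a * D (a * b) * D a) \<and>
     (\<forall>a b. R (a * b) = R b * R (a * b) * R b) \<and>
     (\<forall>a. R (D a) = D a) \<and> (\<forall>a. D (R a) = R a)"

definition Ehresmann_semigroup :: "('a::semigroup_mult \<Rightarrow> 'a) \<Rightarrow> ('a \<Rightarrow> 'a) \<Rightarrow> bool" where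
  "Ehresmann_semigroup D R \<longleftrightarrow> DRC_semigroup D R \<and>
     (\<forall>a b. D a * D b = D b * D a) \<and> (\<forall>a b. R a * R b = R b * R a)"

definition projections :: "('a::semigroup_mult \<Rightarrow> 'a) \<Rightarrow> 'a set" where
  "projections D = range D"

definition proj_le :: "'a::semigroup_mult \<Rightarrow> 'a \<Rightarrow> bool" where
  "proj_le p q \<longleftrightarrow> p = p * q \<and> p = q * p"

definition le_l :: "('a::semigroup_mult \<Rightarrow> 'a) \<Rightarrow> 'a rel" where
  "le_l D = {(a, b). \<exists>p \<in> projections D. proj_le p (D b) \<and> a = p * b}"

definition le_r :: "('a::semigroup_mult \<Rightarrow> 'a) \<Rightarrow> ('a \<Rightarrow> 'a) \<Rightarrow> 'a rel" where
  "le_r D R = {(a, b). \<exists>q \<in> projections D. proj_le q (R b) \<and> a = b * q}"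

end

theory Submission
  imports Defs
begin

locale ehr =
  fixes D R :: "'a::semigroup_mult \<Rightarrow> 'a"
  assumes E: "Ehresmann_semigroup D R"
begin

lemma DA: "D a * a = a" using E by (simp add: Ehresmann_semigroup_def DRC_semigroup_def)
lemma RA: "a * R a = a" using E by (simp add: Ehresmann_semigroup_def DRC_semigroup_def)
lemma Dc: "D (a * b) = D (a * D b)" using E by (simp add: Ehresmann_semigroup_def DRC_semigroup_def)
lemma Rc: "R (a * b) = R (R a * b)" using E by (simp add: Ehresmann_semigroup_def DRC_semigroup_def)
lemma Ds: "D (a * b) = D a * D (a * b) * D a" using E by (simp add: Ehresmann_semigroup_def DRC_semigroup_def)
lemma Rs: "R (a * b) = R b * R (a * b) * R b" using E by (simp add: Ehresmann_semigroup_def DRC_semigroup_def)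
lemma RD: "R (D a) = D a" using E by (simp add: Ehresmann_semigroup_def DRC_semigroup_def)
lemma DR: "D (R a) = R a" using E by (simp add: Ehresmann_semigroup_def DRC_semigroup_def)
lemma Dcom: "D a * D b = D b * D a" using E by (simp add: Ehresmann_semigroup_def)

lemma DD: "D (D a) = D a" by (metis RD DR)

lemma idem: "D a * D a = D a" by (metis DA DD)

lemma Dle1: "D a * D (a * b) = D (a * b)"
  by (metis Ds idem mult.assoc)
lemma Dle2: "D (a * b) * D a = D (a * b)"
  by (metis Ds idem mult.assoc)
lemma Rle1: "R b * R (a * b) = R (a * b)"
proof -
  have "R b * R b = R b" by (metis DR idem)
  then show ?thesis by (metis Rs mult.assoc)
qed
lemma Rle2: "R (a * b) * R b = R (a * b)"
proof -
  have "R b * R b = R b" by (metis DR idem)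
  then show ?thesis by (metis Rs mult.assoc)
qed

lemma prod_proj: "D a * D b = D (D a * D b)"
proof -
  let ?e = "D a" and ?f = "D b"
  have 1: "D (?e * ?f) * ?e = D (?e * ?f)" using Dle2[of ?e ?f] by (simp add: DD)
  have 2: "D (?f * ?e) * ?f = D (?f * ?e)" using Dle2[of ?f ?e] by (simp add: DD)
  have c: "?e * ?f = ?f * ?e" by (rule Dcom)
  have "D (?e * ?f) * (?e * ?f) = D (?e * ?f)"
    using 1 2 c by (metis mult.assoc)
  moreover have "D (?e * ?f) * (?e * ?f) = ?e * ?f" by (rule DA)
  ultimately show ?thesis by simp
qed

lemma projD: "p \<in> projections D \<Longrightarrow> D p = p"
  unfolding projections_def using DD by auto
lemma projR: "p \<in> projections D \<Longrightarrow> R p = p"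
  unfolding projections_def using RD by auto
lemma Rproj: "R a \<in> projections D"
  unfolding projections_def by (metis DR rangeI)
lemma Dproj: "D a \<in> projections D"
  unfolding projections_def by simp

lemma main1: "le_l D O le_r D R \<subseteq> le_r D R O le_l D"
proof
  fix xz assume "xz \<in> le_l D O le_r D R"
  then obtain x y z p q where xz: "xz = (x, z)" and p: "p \<in> projections D" "proj_le p (D y)"
    and xy: "x = p * y" and q: "q \<in> projections D" "proj_le q (R z)" and yz: "y = z * q"
    unfolding le_l_def le_r_def by blast
  obtain a where pa: "p = D a" using p unfolding projections_def by auto
  obtain b where qb: "q = D b" using q unfolding projections_def by auto
  have x: "x = p * z * q" using xy yz by (simp add: mult.assoc)
  have pDz: "proj_le p (D z)"
  proof -
    have "p = p * D (z * q)" using p yz unfolding proj_le_def by simp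
    also have "\<dots> = p * (D (z * q) * D z)" using Dle2 by simp
    finally have "p = p * D z" by (metis mult.assoc \<open>p = p * D (z * q)\<close>)
    then show ?thesis unfolding proj_le_def using pa Dcom by metis
  qed
  have "R x = R (R (p * z) * q)" using x Rc by simp
  also have "R (p * z) * q = D (R (p*z)) * D b" using DR qb by simp
  also have "\<dots> = D (D (R (p*z)) * D b)" by (rule prod_proj)
  finally have "R x = R (D (D (R (p * z)) * D b))" .
  also have "\<dots> = D (D (R (p * z)) * D b)" by (rule RD)
  also have "\<dots> = D (R (p * z)) * D b" by (rule prod_proj[symmetric])
  finally have Rx: "R x = R (p * z) * q" using DR qb by simp
  have leq: "proj_le (R x) (R (p * z))"
  proof -
    have c: "R (p * z) * q = q * R (p * z)" by (metis DR qb Dcom)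
    have i: "R (p * z) * R (p * z) = R (p * z)" by (metis DR idem)
    show ?thesis unfolding proj_le_def Rx using c i by (metis mult.assoc)
  qed
  have "x * R x = x" by (rule RA)
  have qRx: "q * R x = R x"
  proof -
    have "q * q = q" using qb idem by simp
    then show ?thesis unfolding Rx using qb by (metis Dcom DR mult.assoc)
  qed
  have xeq: "x = p * z * R x" using RA[of x] x qRx by (metis mult.assoc)
  have "(x, p * z) \<in> le_r D R" unfolding le_r_def using Rproj leq xeq by blast
  moreover have "(p * z, z) \<in> le_l D" unfolding le_l_def using p(1) pDz by blast
  ultimately show "xz \<in> le_r D R O le_l D" using xz by blast
qed

lemma main2: "le_r D R O le_l D \<subseteq> le_l D O le_r D R"
proof
  fix xz assume "xz \<in> le_r D R O le_l D"
  then obtain x y z p q where xz: "xz = (x, z)" and q: "q \<in> projections D" "proj_le q (R y)"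
    and xy: "x = y * q" and p: "p \<in> projections D" "proj_le p (D z)" and yz: "y = p * z"
    unfolding le_l_def le_r_def by blast
  obtain a where pa: "p = D a" using p unfolding projections_def by auto
  obtain b where qb: "q = D b" using q unfolding projections_def by auto
  have x: "x = p * (z * q)" using xy yz by (simp add: mult.assoc)
  have qRz: "proj_le q (R z)"
  proof -
    have "q = R (p * z) * q" using q yz unfolding proj_le_def by simp
    also have "\<dots> = (R z * R (p * z)) * q" using Rle1 by simp
    finally have "q = R z * q" by (metis mult.assoc \<open>q = R (p * z) * q\<close>)
    then show ?thesis unfolding proj_le_def using qb by (metis Dcom DR)
  qed
  have "D x = D (p * D (z * q))" using x Dc by simp
  also have "p * D (z * q) = D (D a * D (z * q))" using pa prod_proj by simp
  finally have Dx: "D x = p * D (z * q)" using DD pa prod_proj by metis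
  have lep: "proj_le (D x) (D (z * q))"
  proof -
    have c: "p * D (z * q) = D (z * q) * p" by (metis pa Dcom)
    have i: "D (z * q) * D (z * q) = D (z * q)" by (rule idem)
    show ?thesis unfolding proj_le_def Dx using c i by (metis mult.assoc)
  qed
  have Dxp: "D x * p = D x"
  proof -
    have "p * p = p" using pa idem by simp
    then show ?thesis unfolding Dx using pa by (metis Dcom mult.assoc)
  qed
  have xeq: "x = D x * (z * q)" using DA[of x] x Dxp by (metis mult.assoc)
  have "(x, z * q) \<in> le_l D" unfolding le_l_def using Dproj lep xeq by blast
  moreover have "(z * q, z) \<in> le_r D R" unfolding le_r_def using q(1) qRz by blast
  ultimately show "xz \<in> le_l D O le_r D R" using xz by blast
qed

end

theorem proposition10p3:
  fixes D R :: "'a::semigroup_mult \<Rightarrow> 'a"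
  assumes "Ehresmann_semigroup D R"
  shows "le_l D O le_r D R = le_r D R O le_l D"
proof -
  interpret ehr D R using assms by unfold_locales
  show ?thesis using main1 main2 by blast
qed

end
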